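(* Let $\mathcal{X}$ and $\mathcal{Y}$ be finite sets, let $\Pr$ be a probability distribution on $\mathcal{X}$, let $\delta:\mathcal{X}\times\mathcal{Y}\to\mathbb{R}$, and let $\bar\pi,\pi_1,\dots,\pi_m$ be stochastic policies, each $\pi_i$ having support for $\bar\pi$ and satisfying $\sigma^2_\delta(\bar\pi\|\pi_i)>0$. Let $\mathcal{D}=\bigcup_{i=1}^m\mathcal{D}^i$ be a log dataset in which, for each $i$, $\mathcal{D}^i$ consists of $n_i\ge1$ samples $(x^i_j,y^i_j,\delta^i_j,p^i_j)$ with $x^i_j\sim\Pr$, $y^i_j\sim\pi_i(\cdot\mid x^i_j)$, $\delta^i_j=\delta(x^i_j,y^i_j)$, $p^i_j=\pi_i(y^i_j\mid x^i_j)$, all draws independent; let $n=\sum_in_i$. Define $$\hat U_{naive}(\bar\pi)=\frac1n\sum_{i=1}^m\sum_{j=1}^{n_i}\frac{\delta^i_j\bar\pi(y^i_j\mid x^i_j)}{p^i_j},\qquad \hat U_{weight}(\bar\pi)=\sum_{i=1}^m\lambda_i^*\sum_{j=1}^{n_i}\frac{\delta^i_j\bar\pi(y^i_j\mid x^i_j)}{p^i_j},$$ where $\lambda_i^*=\Big(\sigma^2_\delta(\bar\pi\|\pi_i)\sum_{j=1}^m\frac{n_j}{\sigma^2_\delta(\bar\pi\|\pi_j)}\Big)^{-1}$. Let $v_i=\sigma^2_\delta(\bar\pi\|\pi_i)/\sigma^2_\delta(\bar\pi\|\pi_m)$ and $r_i=n_i/n_m$. Then $$\gamma:=\frac{\mathrm{Var}_{\mathcal{D}}[\hat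 U_{weight}(\bar\pi)]}{\mathrm{Var}_{\mathcal{D}}[\hat U_{naive}(\bar\pi)]}=\frac{\big(\sum_{i=1}^m r_i\big)^2}{\big(\sum_{i=1}^m r_iv_i\big)\big(\sum_{i=1}^m \frac{r_i}{v_i}\big)}\le1.$$
   Context: A stochastic policy $\pi$ assigns to each $x\in\mathcal{X}$ a probability distribution $\pi(\cdot\mid x)$ on $\mathcal{Y}$. The utility is $U(\pi)=\sum_{x,y}\Pr(x)\pi(y\mid x)\delta(x,y)$. A policy $\pi$ has support for $\pi'$ if $\delta(x,y)\pi'(y\mid x)\neq0$ implies $\pi(y\mid x)>0$ for all $x,y$. For $\pi$ having support for $\bar\pi$, the divergence is $\sigma^2_\delta(\bar\pi\|\pi)=\mathrm{Var}_{x\sim\Pr,\,y\sim\pi(\cdot\mid x)}\big[\delta(x,y)\bar\pi(y\mid x)/\pi(y\mid x)\big]=\sum_{x,y}\frac{(\delta(x,y)\bar\pi(y\mid x))^2}{\pi(y\mid x)}\Pr(x)-U(\bar\pi)^2$. Variances are over the random draw of $\mathcal{D}$. *)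

theory Defs
  imports "HOL-Probability.Probability"
begin

text \<open>Stochastic policies are maps 'x => 'y pmf; pi(y|x) = pmf (pi x) y.
  Contexts are drawn from P :: 'x pmf; delta :: 'x => 'y => real.\<close>

definition sample_pmf :: "'x pmf \<Rightarrow> ('x \<Rightarrow> 'y pmf) \<Rightarrow> ('x \<times> 'y) pmf" where
  "sample_pmf P pol = do { x \<leftarrow> P; y \<leftarrow> pol x; return_pmf (x, y) }"

definition has_support_for :: "('x \<Rightarrow> 'y \<Rightarrow> real) \<Rightarrow> ('x \<Rightarrow> 'y pmf) \<Rightarrow> ('x \<Rightarrow> 'y pmf) \<Rightarrow> bool" where
  "has_support_for \<delta> pol pol' \<longleftrightarrow> (\<forall>x y. \<delta> x y * pmf (pol' x) y \<noteq> 0 \<longrightarrow> pmf (pol x) y > 0)"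

definition divergence :: "'x pmf \<Rightarrow> ('x \<Rightarrow> 'y \<Rightarrow> real) \<Rightarrow> ('x \<Rightarrow> 'y pmf) \<Rightarrow> ('x \<Rightarrow> 'y pmf) \<Rightarrow> real" where
  "divergence P \<delta> pibar pol =
     measure_pmf.variance (sample_pmf P pol) (\<lambda>(x, y). \<delta> x y * pmf (pibar x) y / pmf (pol x) y)"

text \<open>Log dataset: indexed by (i,j) with i < m, j < ns i; sample (i,j) is (x^i_j, y^i_j).
  The logged delta^i_j = delta(x,y) and propensity p^i_j = pol_i(y|x) are functions of (x,y).\<close>
definition log_index :: "nat \<Rightarrow> (nat \<Rightarrow> nat) \<Rightarrow> (nat \<times> nat) set" where
  "log_index m ns = {(i, j). i < m \<and> j < ns i}"

definition dataset_pmf :: "'x pmf \<Rightarrow> (nat \<Rightarrow> 'x \<Rightarrow> 'y pmf) \<Rightarrow> nat \<Rightarrow> (nat \<Rightarrow> nat)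
    \<Rightarrow> (nat \<times> nat \<Rightarrow> 'x \<times> 'y) pmf" where
  "dataset_pmf P pols m ns = Pi_pmf (log_index m ns) undefined (\<lambda>(i, j). sample_pmf P (pols i))"

definition ips_term :: "('x \<Rightarrow> 'y \<Rightarrow> real) \<Rightarrow> ('x \<Rightarrow> 'y pmf) \<Rightarrow> ('x \<Rightarrow> 'y pmf) \<Rightarrow> 'x \<times> 'y \<Rightarrow> real" where
  "ips_term \<delta> pibar pol s = (case s of (x, y) \<Rightarrow> \<delta> x y * pmf (pibar x) y / pmf (pol x) y)"

definition U_naive :: "('x \<Rightarrow> 'y \<Rightarrow> real) \<Rightarrow> ('x \<Rightarrow> 'y pmf) \<Rightarrow> (nat \<Rightarrow> 'x \<Rightarrow> 'y pmf) \<Rightarrow> nat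
    \<Rightarrow> (nat \<Rightarrow> nat) \<Rightarrow> (nat \<times> nat \<Rightarrow> 'x \<times> 'y) \<Rightarrow> real" where
  "U_naive \<delta> pibar pols m ns D =
     (1 / real (\<Sum>i<m. ns i)) * (\<Sum>i<m. \<Sum>j<ns i. ips_term \<delta> pibar (pols i) (D (i, j)))"

definition lambda_star :: "'x pmf \<Rightarrow> ('x \<Rightarrow> 'y \<Rightarrow> real) \<Rightarrow> ('x \<Rightarrow> 'y pmf) \<Rightarrow> (nat \<Rightarrow> 'x \<Rightarrow> 'y pmf)
    \<Rightarrow> nat \<Rightarrow> (nat \<Rightarrow> nat) \<Rightarrow> nat \<Rightarrow> real" where
  "lambda_star P \<delta> pibar pols m ns i =
     1 / (divergence P \<delta> pibar (pols i) * (\<Sum>j<m. real (ns j) / divergence P \<delta> pibar (pols j)))"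

definition U_weight :: "'x pmf \<Rightarrow> ('x \<Rightarrow> 'y \<Rightarrow> real) \<Rightarrow> ('x \<Rightarrow> 'y pmf) \<Rightarrow> (nat \<Rightarrow> 'x \<Rightarrow> 'y pmf) \<Rightarrow> nat
    \<Rightarrow> (nat \<Rightarrow> nat) \<Rightarrow> (nat \<times> nat \<Rightarrow> 'x \<times> 'y) \<Rightarrow> real" where
  "U_weight P \<delta> pibar pols m ns D =
     (\<Sum>i<m. lambda_star P \<delta> pibar pols m ns i * (\<Sum>j<ns i. ips_term \<delta> pibar (pols i) (D (i, j))))"

end

theory Submission
  imports Defs
begin


lemma exp_pair_mult:
  fixes F :: "'a \<Rightarrow> real" and G :: "'b \<Rightarrow> real"
  assumes "finite (set_pmf M)" "finite (set_pmf N)"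
  shows "measure_pmf.expectation (pair_pmf M N) (\<lambda>z. F (fst z) * G (snd z))
         = measure_pmf.expectation M F * measure_pmf.expectation N G"
proof -
  have "measure_pmf.expectation (pair_pmf M N) (\<lambda>z. F (fst z) * G (snd z))
     = (\<Sum>z\<in>set_pmf M \<times> set_pmf N. F (fst z) * G (snd z) * pmf (pair_pmf M N) z)"
    using assms by (intro integral_measure_pmf_real) auto
  also have "\<dots> = (\<Sum>a\<in>set_pmf M. \<Sum>b\<in>set_pmf N. (F a * pmf M a) * (G b * pmf N b))"
  proof -
    have "(\<Sum>z\<in>set_pmf M \<times> set_pmf N. F (fst z) * G (snd z) * pmf (pair_pmf M N) z)
        = (\<Sum>(a,b)\<in>set_pmf M \<times> set_pmf N. (F a * pmf M a) * (G b * pmf N b))"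
      by (intro sum.cong) (auto simp: pmf_pair)
    thus ?thesis by (simp add: sum.cartesian_product)
  qed
  also have "\<dots> = (\<Sum>a\<in>set_pmf M. F a * pmf M a) * (\<Sum>b\<in>set_pmf N. G b * pmf N b)"
    by (simp add: sum_product)
  also have "\<dots> = measure_pmf.expectation M F * measure_pmf.expectation N G"
    using assms by (simp add: integral_measure_pmf_real)
  finally show ?thesis .
qed

lemma var_pair:
  fixes F :: "'a \<Rightarrow> real" and G :: "'b \<Rightarrow> real"
  assumes fM: "finite (set_pmf M)" and fN: "finite (set_pmf N)"
  shows "measure_pmf.variance (pair_pmf M N) (\<lambda>z. F (fst z) + G (snd z))
         = measure_pmf.variance M F + measure_pmf.variance N G"
proof -
  define a where "a = measure_pmf.expectation M F"
  define b where "b = measure_pmf.expectation N G"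
  have fP: "finite (set_pmf (pair_pmf M N))" using assms by simp
  note int = integrable_measure_pmf_finite[OF fP]
  have E: "measure_pmf.expectation (pair_pmf M N) (\<lambda>z. F (fst z) + G (snd z)) = a + b"
    by (subst Bochner_Integration.integral_add) (auto intro: int simp: a_def b_def)
  have "(\<lambda>z. (F (fst z) + G (snd z) - (a + b))\<^sup>2) =
        (\<lambda>z. ((F (fst z) - a)\<^sup>2 + (G (snd z) - b)\<^sup>2) + 2 * ((F (fst z) - a) * (G (snd z) - b)))"
    by (auto simp: fun_eq_iff power2_eq_square algebra_simps)
  hence "measure_pmf.variance (pair_pmf M N) (\<lambda>z. F (fst z) + G (snd z))
     = measure_pmf.expectation (pair_pmf M N) (\<lambda>z. ((F (fst z) - a)\<^sup>2 + (G (snd z) - b)\<^sup>2) + 2 * ((F (fst z) - a) * (G (snd z) - b)))"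
    by (simp add: E)
  also have "\<dots> = measure_pmf.expectation (pair_pmf M N) (\<lambda>z. (F (fst z) - a)\<^sup>2)
     + measure_pmf.expectation (pair_pmf M N) (\<lambda>z. (G (snd z) - b)\<^sup>2)
     + 2 * measure_pmf.expectation (pair_pmf M N) (\<lambda>z. (F (fst z) - a) * (G (snd z) - b))"
    by (simp add: Bochner_Integration.integral_add int)
  also have "measure_pmf.expectation (pair_pmf M N) (\<lambda>z. (F (fst z) - a) * (G (snd z) - b))
     = measure_pmf.expectation M (\<lambda>x. F x - a) * measure_pmf.expectation N (\<lambda>x. G x - b)"
    by (rule exp_pair_mult[OF fM fN])
  also have "measure_pmf.expectation M (\<lambda>x. F x - a) = 0"
    using integrable_measure_pmf_finite[OF fM, of F]
    by (simp add: Bochner_Integration.integral_diff a_def)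
  moreover have "measure_pmf.expectation (pair_pmf M N) (\<lambda>z. (F (fst z) - a)\<^sup>2) = measure_pmf.variance M F"
    using expectation_pair_pmf_fst[of M N "\<lambda>u. (F u - a)\<^sup>2"] by (simp add: a_def)
  moreover have "measure_pmf.expectation (pair_pmf M N) (\<lambda>z. (G (snd z) - b)\<^sup>2) = measure_pmf.variance N G"
    using expectation_pair_pmf_snd[of M N "\<lambda>u. (G u - b)\<^sup>2"] by (simp add: b_def)
  ultimately show ?thesis by simp
qed

lemma var_scale:
  fixes f :: "'a \<Rightarrow> real"
  shows "measure_pmf.variance M (\<lambda>x. c * f x) = c\<^sup>2 * measure_pmf.variance M f"
proof -
  have "(\<lambda>x. (c * f x - measure_pmf.expectation M (\<lambda>x. c * f x))\<^sup>2)
      = (\<lambda>x. c\<^sup>2 * (f x - measure_pmf.expectation M f)\<^sup>2)"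
    by (auto simp: fun_eq_iff power2_eq_square algebra_simps)
  thus ?thesis by simp
qed

lemma var_scale':
  fixes f :: "'a \<Rightarrow> real"
  assumes "X = (\<lambda>x. c * f x)"
  shows "measure_pmf.variance M X = c\<^sup>2 * measure_pmf.variance M f"
  using var_scale[of M c f] assms by simp

lemma var_Pi:
  fixes f :: "'k \<Rightarrow> 'a \<Rightarrow> real"
  assumes "finite I" and fin: "\<And>k. finite (set_pmf (p k))"
  shows "measure_pmf.variance (Pi_pmf I d p) (\<lambda>D. \<Sum>k\<in>I. f k (D k))
         = (\<Sum>k\<in>I. measure_pmf.variance (p k) (f k))"
  using assms(1)
proof (induction I rule: finite_induct)
  case empty
  then show ?case by simp
next
  case (insert x A)
  have fA: "finite (set_pmf (Pi_pmf A d p))"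
    using insert(1) fin by (simp add: set_Pi_pmf finite_PiE_dflt)
  have eq: "(\<lambda>z. \<Sum>k\<in>insert x A. f k (((\<lambda>(y, h). h(x := y)) z) k))
      = (\<lambda>z. f x (fst z) + (\<lambda>h. \<Sum>k\<in>A. f k (h k)) (snd z))"
  proof
    fix z :: "'a \<times> ('k \<Rightarrow> 'a)"
    obtain y h where z: "z = (y, h)" by (cases z)
    have "(\<Sum>k\<in>A. f k ((h(x := y)) k)) = (\<Sum>k\<in>A. f k (h k))"
      using insert(2) by (intro sum.cong) auto
    thus "(\<Sum>k\<in>insert x A. f k (((\<lambda>(y, h). h(x := y)) z) k)) = f x (fst z) + (\<lambda>h. \<Sum>k\<in>A. f k (h k)) (snd z)"
      using insert(1,2) z by simp
  qed
  have "measure_pmf.variance (Pi_pmf (insert x A) d p) (\<lambda>D. \<Sum>k\<in>insert x A. f k (D k))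
     = measure_pmf.variance (pair_pmf (p x) (Pi_pmf A d p)) (\<lambda>z. \<Sum>k\<in>insert x A. f k (((\<lambda>(y, h). h(x := y)) z) k))"
    by (simp add: Pi_pmf_insert[OF insert(1,2)])
  also have "\<dots> = measure_pmf.variance (pair_pmf (p x) (Pi_pmf A d p)) (\<lambda>z. f x (fst z) + (\<lambda>h. \<Sum>k\<in>A. f k (h k)) (snd z))"
    using eq by metis
  also have "\<dots> = measure_pmf.variance (p x) (f x) + measure_pmf.variance (Pi_pmf A d p) (\<lambda>h. \<Sum>k\<in>A. f k (h k))"
    by (rule var_pair[OF fin fA])
  also have "\<dots> = (\<Sum>k\<in>insert x A. measure_pmf.variance (p k) (f k))"
    using insert by simp
  finally show ?case .
qed




lemma var_Pi':
  fixes f :: "'k \<Rightarrow> 'a \<Rightarrow> real"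
  assumes "finite I" "\<And>k. finite (set_pmf (p k))" "X = (\<lambda>D. \<Sum>k\<in>I. f k (D k))"
  shows "measure_pmf.variance (Pi_pmf I d p) X = (\<Sum>k\<in>I. measure_pmf.variance (p k) (f k))"
  using var_Pi[OF assms(1,2)] assms(3) by simp

lemma var_dataset:
  fixes P :: "('x::finite) pmf"
    and \<delta> :: "'x \<Rightarrow> ('y::finite) \<Rightarrow> real"
    and pibar :: "'x \<Rightarrow> 'y pmf"
    and pols :: "nat \<Rightarrow> 'x \<Rightarrow> 'y pmf"
    and c :: "nat \<Rightarrow> real"
  shows "measure_pmf.variance (dataset_pmf P pols m ns)
           (\<lambda>D. \<Sum>i<m. c i * (\<Sum>j<ns i. ips_term \<delta> pibar (pols i) (D (i, j))))
         = (\<Sum>i<m. real (ns i) * (c i)\<^sup>2 * divergence P \<delta> pibar (pols i))"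
proof -
  define I where "I = log_index m ns"
  have I: "I = Sigma {..<m} (\<lambda>i. {..<ns i})" by (auto simp: I_def log_index_def)
  have finI: "finite I" by (simp add: I)
  define p where "p = (\<lambda>(i::nat, j::nat). sample_pmf P (pols i))"
  have finp: "finite (set_pmf (p k))" for k
    by (rule finite_subset[OF subset_UNIV]) simp
  define f :: "nat \<times> nat \<Rightarrow> 'x \<times> 'y \<Rightarrow> real" where "f = (\<lambda>k s. c (fst k) * ips_term \<delta> pibar (pols (fst k)) s)"
  have feq: "(\<lambda>D. \<Sum>i<m. c i * (\<Sum>j<ns i. ips_term \<delta> pibar (pols i) (D (i, j))))
     = (\<lambda>D. \<Sum>k\<in>I. f k (D k))"
    by (auto simp: fun_eq_iff I f_def sum_distrib_left sum.Sigma split_beta')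
  have ds: "dataset_pmf P pols m ns = Pi_pmf I undefined p"
    by (simp add: dataset_pmf_def I_def p_def)
  have dv: "measure_pmf.variance (p k) (ips_term \<delta> pibar (pols (fst k))) = divergence P \<delta> pibar (pols (fst k))" for k
  proof -
    have ips: "ips_term \<delta> pibar pol = (\<lambda>(x, y). \<delta> x y * pmf (pibar x) y / pmf (pol x) y)" for pol
      by (auto simp: fun_eq_iff ips_term_def)
    show ?thesis by (cases k) (simp only: p_def divergence_def ips prod.case fst_conv)
  qed
  have "measure_pmf.variance (dataset_pmf P pols m ns)
           (\<lambda>D. \<Sum>i<m. c i * (\<Sum>j<ns i. ips_term \<delta> pibar (pols i) (D (i, j))))
      = (\<Sum>k\<in>I. measure_pmf.variance (p k) (f k))"
    unfolding ds by (rule var_Pi'[OF finI finp feq])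
  also have "\<dots> = (\<Sum>k\<in>I. (c (fst k))\<^sup>2 * divergence P \<delta> pibar (pols (fst k)))"
  proof (intro sum.cong refl)
    fix k assume "k \<in> I"
    have "measure_pmf.variance (p k) (f k) = (c (fst k))\<^sup>2 * measure_pmf.variance (p k) (ips_term \<delta> pibar (pols (fst k)))"
      by (rule var_scale') (simp add: f_def fun_eq_iff)
    thus "measure_pmf.variance (p k) (f k) = (c (fst k))\<^sup>2 * divergence P \<delta> pibar (pols (fst k))"
      by (simp only: dv)
  qed
  also have "\<dots> = (\<Sum>i<m. real (ns i) * (c i)\<^sup>2 * divergence P \<delta> pibar (pols i))"
  proof -
    let ?g = "\<lambda>i. (c i)\<^sup>2 * divergence P \<delta> pibar (pols i)"
    have "(\<Sum>k\<in>I. ?g (fst k)) = (\<Sum>(i,j)\<in>Sigma {..<m} (\<lambda>i. {..<ns i}). ?g i)"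
      unfolding I by (rule sum.cong) auto
    also have "\<dots> = (\<Sum>i<m. \<Sum>j<ns i. ?g i)"
      by (rule sum.Sigma[symmetric]) auto
    finally show ?thesis by (simp add: mult.assoc)
  qed
  finally show ?thesis .
qed

theorem proposition6p5:
  fixes P :: "('x::finite) pmf"
    and \<delta> :: "'x \<Rightarrow> ('y::finite) \<Rightarrow> real"
    and pibar :: "'x \<Rightarrow> 'y pmf"
    and pols :: "nat \<Rightarrow> 'x \<Rightarrow> 'y pmf"
    and m :: nat and ns :: "nat \<Rightarrow> nat"
  assumes m_pos: "m \<ge> 1"
    and supp: "\<And>i. i < m \<Longrightarrow> has_support_for \<delta> (pols i) pibar"
    and div_pos: "\<And>i. i < m \<Longrightarrow> divergence P \<delta> pibar (pols i) > 0"
    and ns_pos: "\<And>i. i < m \<Longrightarrow> ns i \<ge> 1"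
  defines "v \<equiv> (\<lambda>i. divergence P \<delta> pibar (pols i) / divergence P \<delta> pibar (pols (m - 1)))"
    and "r \<equiv> (\<lambda>i. real (ns i) / real (ns (m - 1)))"
    and "\<gamma> \<equiv> measure_pmf.variance (dataset_pmf P pols m ns) (U_weight P \<delta> pibar pols m ns)
              / measure_pmf.variance (dataset_pmf P pols m ns) (U_naive \<delta> pibar pols m ns)"
  shows "\<gamma> = (\<Sum>i<m. r i)\<^sup>2 / ((\<Sum>i<m. r i * v i) * (\<Sum>i<m. r i / v i)) \<and> \<gamma> \<le> 1"
proof -
  define \<sigma> where "\<sigma> = (\<lambda>i. divergence P \<delta> pibar (pols i))"
  define N where "N = (\<lambda>i. real (ns i))"
  define n where "n = (\<Sum>i<m. N i)"
  define S where "S = (\<Sum>i<m. N i / \<sigma> i)"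
  define T where "T = (\<Sum>i<m. N i * \<sigma> i)"
  have sp: "i < m \<Longrightarrow> \<sigma> i > 0" for i using div_pos by (simp add: \<sigma>_def)
  have Np: "i < m \<Longrightarrow> N i \<ge> 1" for i using ns_pos by (simp add: N_def)
  have Npos: "i < m \<Longrightarrow> N i > 0" for i using Np[of i] by linarith
  have m0: "{..<m} \<noteq> {}" using m_pos by (auto simp: lessThan_empty_iff)
  have lm: "m - 1 < m" using m_pos by simp
  have Sp: "S > 0" unfolding S_def
    by (rule sum_pos) (use m0 sp Npos in \<open>auto intro!: divide_pos_pos\<close>)
  have Tp: "T > 0" unfolding T_def
    by (rule sum_pos) (use m0 sp Npos in \<open>auto intro!: mult_pos_pos\<close>)
  have np: "n > 0" unfolding n_def
    by (rule sum_pos) (use m0 Npos in \<open>auto\<close>)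
  have Vn: "measure_pmf.variance (dataset_pmf P pols m ns) (U_naive \<delta> pibar pols m ns) = T / n\<^sup>2"
  proof -
    have "U_naive \<delta> pibar pols m ns = (\<lambda>D. \<Sum>i<m. (\<lambda>_. 1 / real (\<Sum>i<m. ns i)) i * (\<Sum>j<ns i. ips_term \<delta> pibar (pols i) (D (i, j))))"
      by (simp add: U_naive_def fun_eq_iff sum_distrib_left)
    hence "measure_pmf.variance (dataset_pmf P pols m ns) (U_naive \<delta> pibar pols m ns)
        = (\<Sum>i<m. real (ns i) * (1 / real (\<Sum>i<m. ns i))\<^sup>2 * divergence P \<delta> pibar (pols i))"
      using var_dataset[of P pols m ns "\<lambda>_. 1 / real (\<Sum>i<m. ns i)" \<delta> pibar] by simp
    also have "\<dots> = (\<Sum>i<m. N i * \<sigma> i) / n\<^sup>2"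
      by (simp add: N_def n_def \<sigma>_def sum_divide_distrib power2_eq_square)
    finally show ?thesis by (simp add: T_def)
  qed
  have lam: "i < m \<Longrightarrow> lambda_star P \<delta> pibar pols m ns i = 1 / (\<sigma> i * S)" for i
    by (simp add: lambda_star_def \<sigma>_def S_def N_def)
  have Vw: "measure_pmf.variance (dataset_pmf P pols m ns) (U_weight P \<delta> pibar pols m ns) = 1 / S"
  proof -
    have "measure_pmf.variance (dataset_pmf P pols m ns) (U_weight P \<delta> pibar pols m ns)
        = (\<Sum>i<m. real (ns i) * (lambda_star P \<delta> pibar pols m ns i)\<^sup>2 * divergence P \<delta> pibar (pols i))"
      unfolding U_weight_def by (rule var_dataset)
    also have "\<dots> = (\<Sum>i<m. (N i / \<sigma> i) / S\<^sup>2)"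
    proof (rule sum.cong[OF refl])
      fix i assume "i \<in> {..<m}"
      hence "i < m" by simp
      thus "real (ns i) * (lambda_star P \<delta> pibar pols m ns i)\<^sup>2 * divergence P \<delta> pibar (pols i) = (N i / \<sigma> i) / S\<^sup>2"
        using sp[of i] Sp by (simp add: lam N_def \<sigma>_def field_simps power2_eq_square)
    qed
    also have "\<dots> = S / S\<^sup>2" by (simp add: S_def sum_divide_distrib)
    also have "\<dots> = 1 / S" using Sp by (simp add: power2_eq_square)
    finally show ?thesis .
  qed
  have g: "\<gamma> = n\<^sup>2 / (S * T)"
    unfolding \<gamma>_def Vn Vw using Sp Tp np by (simp add: field_simps)
  have sm: "\<sigma> (m - 1) > 0" and Nm: "N (m - 1) > 0" using sp[OF lm] Np[OF lm] by auto
  have r1: "(\<Sum>i<m. r i) = n / N (m - 1)"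
    by (simp add: r_def n_def N_def sum_divide_distrib)
  have r2: "(\<Sum>i<m. r i * v i) = T / (N (m - 1) * \<sigma> (m - 1))"
    by (simp add: r_def v_def T_def N_def \<sigma>_def sum_divide_distrib)
  have r3: "(\<Sum>i<m. r i / v i) = S * \<sigma> (m - 1) / N (m - 1)"
  proof -
    have "(\<Sum>i<m. r i / v i) = (\<Sum>i<m. (N i / \<sigma> i) * (\<sigma> (m - 1) / N (m - 1)))"
      by (rule sum.cong) (simp_all add: r_def v_def N_def \<sigma>_def)
    also have "\<dots> = S * (\<sigma> (m - 1) / N (m - 1))"
      unfolding S_def by (rule sum_distrib_right[symmetric])
    finally show ?thesis by simp
  qed
  have eq: "\<gamma> = (\<Sum>i<m. r i)\<^sup>2 / ((\<Sum>i<m. r i * v i) * (\<Sum>i<m. r i / v i))"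
    unfolding g r1 r2 r3 using sm Nm by (simp add: field_simps power2_eq_square)
  have CS: "n\<^sup>2 \<le> T * S"
  proof -
    have "(\<Sum>i<m. sqrt (N i * \<sigma> i) * sqrt (N i / \<sigma> i))\<^sup>2
        \<le> (\<Sum>i<m. (sqrt (N i * \<sigma> i))\<^sup>2) * (\<Sum>i<m. (sqrt (N i / \<sigma> i))\<^sup>2)"
      by (rule Cauchy_Schwarz_ineq_sum)
    moreover have "(\<Sum>i<m. sqrt (N i * \<sigma> i) * sqrt (N i / \<sigma> i)) = n"
      unfolding n_def
    proof (rule sum.cong[OF refl])
      fix i assume "i \<in> {..<m}"
      hence "\<sigma> i > 0" "N i \<ge> 1" using sp Np by auto
      thus "sqrt (N i * \<sigma> i) * sqrt (N i / \<sigma> i) = N i"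
        by (simp add: real_sqrt_mult[symmetric])
    qed
    moreover have "(\<Sum>i<m. (sqrt (N i * \<sigma> i))\<^sup>2) = T"
      unfolding T_def by (rule sum.cong) (use sp Npos in \<open>auto intro!: less_imp_le\<close>)
    moreover have "(\<Sum>i<m. (sqrt (N i / \<sigma> i))\<^sup>2) = S"
      unfolding S_def by (rule sum.cong) (use sp Npos in \<open>auto intro!: less_imp_le\<close>)
    ultimately show ?thesis by simp
  qed
  have "\<gamma> \<le> 1" unfolding g using CS Sp Tp by (simp add: mult.commute)
  with eq show ?thesis by simp
qed

end
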